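(* Let $\mathbb P$ be a concept class of generalized propensity scores and $\mathbb D$ a concept class of covariate-outcome distributions. The average treatment effect $\tau_{\mathcal D}$ is identifiable from the censored distribution $\mathcal C_{\mathcal D}$ over the family of all observational studies $\mathcal D$ realizable with respect to $(\mathbb P,\mathbb D)$ if and only if $(\mathbb P,\mathbb D)$ satisfies the Identifiability Condition.
   Context: An observational study is a probability distribution $\mathcal D$ of a random tuple $(X,T,Y(0),Y(1))$ with covariates $X\in\mathbb R^d$, treatment $T\in\{0,1\}$ and potential outcomes $Y(0),Y(1)\in\mathbb R$; the joint laws $\mathcal D_{X,Y(t)}$ of $(X,Y(t))$, $t\in\{0,1\}$, are assumed to have densities, and $\mathcal D_X$ denotes the law of $X$. The censored distribution $\mathcal C_{\mathcal D}$ is the law of $(X,T,Y(T))$. The generalized propensity scores of $\mathcal D$ are $p_t(x,y)=\Pr_{\mathcal D}[T=t\mid X=x,Y(t)=y]$, $t\in\{0,1\}$. The average treatment effect is $\tau_{\mathcal D}=\mathbb E_{\mathcal D}[Y(1)-Y(0)]$. A concept class of generalized propensity scores is a set $\mathbb P$ of functions $\mathbb R^d\times\mathbb R\to[0,1]$; a concept class of covariate-outcome distributions is a set $\mathbb D$ of probability distributions with densities on $\mathbb R^d\times\mathbb R$; for $\mathcal P\in\mathbb D$, $\mathcal P(x,y)$ denotes its density and $\mathcal P_X$ its marginal on $\mathbb R^d$. $\mathcal D$ is realizable with respect to $(\mathbb P,\mathbb D)$ if $p_0,p_1\in\mathbb P$ and $\mathcal D_{X,Y(0)},\mathcal D_{X,Y(1)}\in\mathbb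 D$. A tuple $(p,\mathcal P)\in\mathbb P\times\mathbb D$ is compatible with $(\mathbb P,\mathbb D)$ if there exist $(\hat p,\hat{\mathcal P})\in\mathbb P\times\mathbb D$ and a valid observational study whose $(p_0,p_1,\mathcal D_{X,Y(0)},\mathcal D_{X,Y(1)})$ equals $(p,\hat p,\mathcal P,\hat{\mathcal P})$ (equivalently, $(\hat p,p,\hat{\mathcal P},\mathcal P)$). A quantity $\eta_{\mathcal D}$ is identifiable from $\mathcal C_{\mathcal D}$ over a family of observational studies if there exists a map $f$ from probability distributions on $\mathbb R^d\times\{0,1\}\times\mathbb R$ to $\mathbb R$ with $f(\mathcal C_{\mathcal D})=\eta_{\mathcal D}$ for every $\mathcal D$ in the family. Identifiability Condition: $(\mathbb P,\mathbb D)$ satisfies it if for any two tuples $(p,\mathcal P),(q,\mathcal Q)\in\mathbb P\times\mathbb D$ that are compatible with $(\mathbb P,\mathbb D)$, at least one of the following holds: (1) $\mathbb E_{(x,y)\sim\mathcal P}[y]=\mathbb E_{(x,y)\sim\mathcal Q}[y]$; (2) $\mathcal P_X\neq\mathcal Q_X$; (3) there exists $(x,y)\in\mathrm{supp}(\mathcal P_X)\times\mathbb R$ with $p(x,y)\mathcal P(x,y)\neq q(x,y)\mathcal Q(x,y)$.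
   Formalization: Condition (3) of the Identifiability Condition requires $p(x,y)\mathcal P(x,y)\neq q(x,y)\mathcal Q(x,y)$ on a set of positive Lebesgue measure in $\mathrm{supp}(\mathcal P_X)\times\mathbb R$ rather than at a single point, and observational studies have integrable Y(0) and Y(1). The statement above fails without it. *)

theory Defs
  imports "HOL-Probability.Probability"
begin

text \<open>An observational study is a probability measure on tuples (X, T, Y(0), Y(1)) with
  X in R^d (type real^'d), T in {0,1} (encoded as bool, True = 1), Y(0), Y(1) real.\<close>

type_synonym 'd obs = "(real^'d) \<times> bool \<times> real \<times> real"
type_synonym 'd cens = "(real^'d) \<times> bool \<times> real"
type_synonym 'd cofun = "(real^'d) \<times> real \<Rightarrow> real"

definition obs_space :: "('d::finite) obs measure" where
  "obs_space = borel \<Otimes>\<^sub>M (count_space UNIV \<Otimes>\<^sub>M (borel \<Otimes>\<^sub>M borel))"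

definition cens_space :: "('d::finite) cens measure" where
  "cens_space = borel \<Otimes>\<^sub>M (count_space UNIV \<Otimes>\<^sub>M borel)"

definition censor :: "('d::finite) obs measure \<Rightarrow> 'd cens measure" where
  "censor D = distr D cens_space (\<lambda>(x,t,y0,y1). (x, t, if t then y1 else y0))"

definition ate :: "('d::finite) obs measure \<Rightarrow> real" where
  "ate D = (\<integral>\<omega>. (case \<omega> of (x,t,y0,y1) \<Rightarrow> y1 - y0) \<partial>D)"

text \<open>A covariate-outcome distribution is represented by its (Lebesgue) density.\<close>
definition is_density :: "('d::finite) cofun \<Rightarrow> bool" where
  "is_density f \<longleftrightarrow> f \<in> borel_measurable lborel \<and> (\<forall>z. 0 \<le> f z)
     \<and> (\<integral>\<^sup>+z. ennreal (f z) \<partial>lborel) = 1"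

definition dist_of :: "('d::finite) cofun \<Rightarrow> ((real^'d) \<times> real) measure" where
  "dist_of f = density lborel (\<lambda>z. ennreal (f z))"

definition xy :: "bool \<Rightarrow> ('d::finite) obs \<Rightarrow> (real^'d) \<times> real" where
  "xy t = (\<lambda>(x,s,y0,y1). (x, if t then y1 else y0))"

definition valid_obs :: "('d::finite) obs measure \<Rightarrow> bool" where
  "valid_obs D \<longleftrightarrow> prob_space D \<and> sets D = sets obs_space
     \<and> integrable D (\<lambda>(x,t,y0,y1). y0) \<and> integrable D (\<lambda>(x,t,y0,y1). y1)
     \<and> (\<forall>t. \<exists>f. is_density f \<and> distr D lborel (xy t) = dist_of f)"

text \<open>gps_dens D t p f: f is the density of the law of (X,Y(t)) under D and p is (a version of)
  the generalized propensity score p_t(x,y) = Pr[T = t | X = x, Y(t) = y], i.e.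
  Pr[T = t, (X,Y(t)) in A] = integral over A of p_t * f for all measurable A.\<close>
definition gps_dens :: "('d::finite) obs measure \<Rightarrow> bool \<Rightarrow> 'd cofun \<Rightarrow> 'd cofun \<Rightarrow> bool" where
  "gps_dens D t p f \<longleftrightarrow> is_density f \<and> distr D lborel (xy t) = dist_of f
     \<and> p \<in> borel_measurable lborel
     \<and> (\<forall>A\<in>sets lborel. emeasure D {\<omega>\<in>space D. fst (snd \<omega>) = t \<and> xy t \<omega> \<in> A}
            = (\<integral>\<^sup>+z\<in>A. ennreal (p z * f z) \<partial>lborel))"

definition realizable :: "('d::finite) cofun set \<Rightarrow> 'd cofun set \<Rightarrow> 'd obs measure \<Rightarrow> bool" where
  "realizable PP DD D \<longleftrightarrow> valid_obs D \<and>
     (\<exists>p0 p1 f0 f1. p0 \<in> PP \<and> p1 \<in> PP \<and> f0 \<in> DD \<and> f1 \<in> DD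
        \<and> gps_dens D False p0 f0 \<and> gps_dens D True p1 f1)"

definition compatible :: "('d::finite) cofun set \<Rightarrow> 'd cofun set \<Rightarrow> 'd cofun \<Rightarrow> 'd cofun \<Rightarrow> bool" where
  "compatible PP DD p P \<longleftrightarrow> p \<in> PP \<and> P \<in> DD \<and>
     (\<exists>ph Ph D. ph \<in> PP \<and> Ph \<in> DD \<and> valid_obs D
        \<and> gps_dens D False p P \<and> gps_dens D True ph Ph)"

definition marg :: "('d::finite) cofun \<Rightarrow> (real^'d) measure" where
  "marg f = distr (dist_of f) borel fst"

definition msupp :: "(real^'d::finite) measure \<Rightarrow> (real^'d) set" where
  "msupp \<mu> = {x. \<forall>e>0. emeasure \<mu> (ball x e) \<noteq> 0}"

definition mean_outcome :: "('d::finite) cofun \<Rightarrow> real" where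
  "mean_outcome f = (\<integral>z. snd z \<partial>dist_of f)"

definition identifiability_condition :: "('d::finite) cofun set \<Rightarrow> 'd cofun set \<Rightarrow> bool" where
  "identifiability_condition PP DD \<longleftrightarrow>
     (\<forall>p P q Q. compatible PP DD p P \<longrightarrow> compatible PP DD q Q \<longrightarrow>
        mean_outcome P = mean_outcome Q
        \<or> marg P \<noteq> marg Q
        \<or> \<not> (AE z in lborel. z \<in> msupp (marg P) \<times> UNIV \<longrightarrow> p z * P z = q z * Q z))"

definition ate_identifiable :: "('d::finite) cofun set \<Rightarrow> 'd cofun set \<Rightarrow> bool" where
  "ate_identifiable PP DD \<longleftrightarrow>
     (\<exists>F :: 'd cens measure \<Rightarrow> real. \<forall>D. realizable PP DD D \<longrightarrow> F (censor D) = ate D)"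

end

theory Submission
  imports Defs
begin

lemma sets_obs: "sets (obs_space::('d::finite) obs measure) = sets (lborel \<Otimes>\<^sub>M (count_space UNIV \<Otimes>\<^sub>M (lborel \<Otimes>\<^sub>M lborel)))"
  unfolding obs_space_def by (intro sets_pair_measure_cong) auto

lemma space_obs[simp]: "space (obs_space::('d::finite) obs measure) = UNIV"
  unfolding obs_space_def by (simp add: space_pair_measure)

lemma space_cens[simp]: "space (cens_space::('d::finite) cens measure) = UNIV"
  unfolding cens_space_def by (simp add: space_pair_measure)

lemma xy_meas[measurable]: "xy t \<in> measurable (obs_space::('d::finite) obs measure) borel"
  unfolding xy_def obs_space_def by (cases t) auto

lemma xy_meas_l: "xy t \<in> measurable (obs_space::('d::finite) obs measure) lborel"
  using xy_meas by (simp add: measurable_lborel2)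

lemma cens_map_meas: "(\<lambda>(x,t,y0,y1). (x, t, if t then y1 else y0)) \<in> measurable (obs_space::('d::finite) obs measure) cens_space"
  unfolding obs_space_def cens_space_def by measurable

definition nu :: "('d::finite) obs measure \<Rightarrow> bool \<Rightarrow> ((real^'d)\<times>real) set \<Rightarrow> ennreal" where
  "nu D t A = emeasure D {\<omega>\<in>space D. fst (snd \<omega>) = t \<and> xy t \<omega> \<in> A}"

lemma cset_meas: "A \<in> sets borel \<Longrightarrow> {c. fst (snd c) = t \<and> (fst c, snd (snd c)) \<in> A} \<in> sets (cens_space::('d::finite) cens measure)"
proof -
  assume A: "A \<in> sets borel"
  have "(\<lambda>c::'d cens. (fst c, snd (snd c))) \<in> measurable cens_space borel"
    unfolding cens_space_def by measurable
  moreover have "(\<lambda>c::'d cens. fst (snd c)) \<in> measurable cens_space (count_space UNIV)"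
    unfolding cens_space_def by measurable
  ultimately have "{c\<in>space cens_space. fst (snd c) = t \<and> (fst c, snd (snd c)) \<in> (A::((real^'d)\<times>real) set)} \<in> sets (cens_space::'d cens measure)"
    using A by measurable
  then show ?thesis by simp
qed

lemma nu_censor:
  fixes D :: "('d::finite) obs measure"
  assumes "sets D = sets obs_space" "A \<in> sets borel"
  shows "nu D t A = emeasure (censor D) {c. fst (snd c) = t \<and> (fst c, snd (snd c)) \<in> A}"
proof -
  have sp: "space D = UNIV" using sets_eq_imp_space_eq[OF assms(1)] by simp
  have m: "(\<lambda>(x,t,y0,y1). (x, t, if t then y1 else y0)) \<in> measurable D (cens_space::('d::finite) cens measure)"
    using cens_map_meas measurable_cong_sets[OF assms(1) refl] by blast
  show ?thesis
    unfolding censor_def nu_def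
    apply (subst emeasure_distr[OF m cset_meas[OF assms(2)]])
    apply (rule arg_cong[where f="emeasure D"])
    by (auto simp: sp xy_def split: if_splits)
qed

lemma censor_eq_nu:
  fixes D D' :: "('d::finite) obs measure"
  assumes D: "sets D = sets obs_space" and D': "sets D' = sets obs_space"
    and eq: "\<And>t A. A \<in> sets borel \<Longrightarrow> nu D t A = nu D' t A"
  shows "censor D = censor D'"
proof (rule measure_eqI)
  show "sets (censor D) = sets (censor D')" by (simp add: censor_def)
  fix S assume "S \<in> sets (censor D)"
  then have S: "S \<in> sets (cens_space::('d::finite) cens measure)" by (simp add: censor_def)
  define Sb where "Sb b = (\<lambda>(x,y). (x,b,y)) -` S" for b
  have Sbm: "Sb b \<in> sets borel" for b
  proof -
    have "(\<lambda>(x,y). (x,b,y)) \<in> measurable (borel \<Otimes>\<^sub>M borel) (cens_space::'d cens measure)"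
      unfolding cens_space_def by measurable
    then have "(\<lambda>(x,y). (x,b,y)) \<in> measurable (borel::((real^'d)\<times>real) measure) (cens_space::'d cens measure)"
      by (simp add: borel_prod)
    from measurable_sets[OF this S] show ?thesis by (simp add: Sb_def)
  qed
  have split: "S = {c. fst (snd c) = False \<and> (fst c, snd (snd c)) \<in> Sb False} \<union> {c. fst (snd c) = True \<and> (fst c, snd (snd c)) \<in> Sb True}"
    by (auto simp: Sb_def) (metis (full_types) prod.collapse)
  have "emeasure (censor E) S = nu E False (Sb False) + nu E True (Sb True)" if E: "sets E = sets obs_space" for E
  proof -
    have "emeasure (censor E) S = emeasure (censor E) {c. fst (snd c) = False \<and> (fst c, snd (snd c)) \<in> Sb False} + emeasure (censor E) {c. fst (snd c) = True \<and> (fst c, snd (snd c)) \<in> Sb True}"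
      apply (subst split)
      apply (rule plus_emeasure[symmetric])
      using cset_meas[OF Sbm[of False], of False] cset_meas[OF Sbm[of True], of True] by (auto simp: censor_def)
    then show ?thesis using nu_censor[OF E Sbm] by simp
  qed
  then show "emeasure (censor D) S = emeasure (censor D') S" using D D' eq Sbm by simp
qed

lemma nu_dens:
  assumes "gps_dens D t p f" "A \<in> sets borel"
  shows "nu D t A = (\<integral>\<^sup>+z\<in>A. ennreal (p z * f z) \<partial>lborel)"
  using assms unfolding gps_dens_def nu_def by auto

lemma dens_AE_eq:
  assumes g: "gps_dens D t p f" and g': "gps_dens D' t p' f'"
    and eq: "\<And>A. A \<in> sets borel \<Longrightarrow> nu D t A = nu D' t A"
    and nn: "\<And>z. 0 \<le> p z * f z" "\<And>z. 0 \<le> p' z * f' z"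
  shows "AE z in lborel. p z * f z = p' z * f' z"
proof -
  have pm: "p \<in> borel_measurable lborel" "f \<in> borel_measurable lborel" "p' \<in> borel_measurable lborel" "f' \<in> borel_measurable lborel"
    using g g' unfolding gps_dens_def is_density_def by auto
  have "density lborel (\<lambda>z. ennreal (p z * f z)) = density lborel (\<lambda>z. ennreal (p' z * f' z))"
    apply (rule measure_eqI)
     apply simp
    apply (subst (1 2) emeasure_density)
    using pm apply (auto)
    using nu_dens[OF g] nu_dens[OF g'] eq by auto
  then have "AE z in lborel. ennreal (p z * f z) = ennreal (p' z * f' z)"
    using pm by (intro sigma_finite_measure.density_unique[OF sigma_finite_lborel]) auto
  then show ?thesis by (rule eventually_mono) (use nn in auto)
qed

lemma marg_distr:
  assumes "sets D = sets obs_space" "distr D lborel (xy t) = dist_of f"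
  shows "marg f = distr D borel fst"
proof -
  have m: "xy t \<in> measurable D lborel"
    using xy_meas_l measurable_cong_sets[OF assms(1) refl] by blast
  have "marg f = distr (distr D lborel (xy t)) borel fst" unfolding marg_def assms(2) ..
  also have "\<dots> = distr D borel (fst \<circ> xy t)"
    by (rule distr_distr) (use m in \<open>auto intro!: borel_measurable_continuous_onI continuous_intros\<close>)
  also have "fst \<circ> xy t = fst" by (auto simp: xy_def)
  finally show ?thesis .
qed

lemma censor_fst:
  fixes D :: "('d::finite) obs measure"
  assumes "sets D = sets obs_space"
  shows "distr (censor D) borel fst = distr D borel fst"
proof -
  have m: "(\<lambda>(x,t,y0,y1). (x, t, if t then y1 else y0)) \<in> measurable D (cens_space::('d::finite) cens measure)"
    using cens_map_meas measurable_cong_sets[OF assms(1) refl] by blast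
  have "distr (censor D) borel fst = distr D borel (fst \<circ> (\<lambda>(x,t,y0,y1). (x, t, if t then y1 else y0)))"
    unfolding censor_def
    by (rule distr_distr) (use m in \<open>auto simp: cens_space_def\<close>)
  also have "fst \<circ> (\<lambda>(x::real^'d,t::bool,y0::real,y1::real). (x, t, if t then y1 else y0)) = fst" by auto
  finally show ?thesis .
qed

lemma ate_mean:
  assumes v: "valid_obs D" and d0: "distr D lborel (xy False) = dist_of f0"
    and d1: "distr D lborel (xy True) = dist_of f1"
  shows "ate D = mean_outcome f1 - mean_outcome f0"
proof -
  have s: "sets D = sets obs_space" using v by (simp add: valid_obs_def)
  have m: "xy t \<in> measurable D lborel" for t
    using xy_meas_l measurable_cong_sets[OF s refl] by blast
  have i: "integrable D (\<lambda>(x,t,y0,y1). y0)" "integrable D (\<lambda>(x,t,y0,y1). y1)" using v by (auto simp: valid_obs_def)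
  have me: "mean_outcome f = (\<integral>\<omega>. snd (xy t \<omega>) \<partial>D)" if "distr D lborel (xy t) = dist_of f" for t f
    unfolding mean_outcome_def that[symmetric]
    by (rule integral_distr[OF m]) (auto intro!: borel_measurable_continuous_onI continuous_intros)
  have e0: "mean_outcome f0 = (\<integral>\<omega>. (case \<omega> of (x,t,y0,y1) \<Rightarrow> y0) \<partial>D)"
    using me[OF d0] by (simp add: xy_def split_beta')
  have e1: "mean_outcome f1 = (\<integral>\<omega>. (case \<omega> of (x,t,y0,y1) \<Rightarrow> y1) \<partial>D)"
    using me[OF d1] by (simp add: xy_def split_beta')
  show ?thesis unfolding ate_def e0 e1
    using Bochner_Integration.integral_diff[OF i(2) i(1)] by (simp add: split_beta')
qed

definition sw :: "('d::finite) obs \<Rightarrow> 'd obs" where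
  "sw = (\<lambda>(x,t,y0,y1). (x, \<not>t, y1, y0))"

lemma sw_meas[measurable]: "sw \<in> measurable (obs_space::('d::finite) obs measure) obs_space"
  unfolding sw_def obs_space_def by measurable

lemma obs_set_meas: "A \<in> sets borel \<Longrightarrow> {\<omega>. fst (snd \<omega>) = t \<and> xy t \<omega> \<in> A} \<in> sets (obs_space::('d::finite) obs measure)"
proof -
  assume A: "A \<in> sets borel"
  have "(\<lambda>c::'d obs. fst (snd c)) \<in> measurable obs_space (count_space UNIV)"
    unfolding obs_space_def by measurable
  then have "{c\<in>space obs_space. fst (snd c) = t \<and> xy t c \<in> (A::((real^'d)\<times>real) set)} \<in> sets (obs_space::'d obs measure)"
    using A by measurable
  then show ?thesis by simp
qed

lemma swap_valid:
  fixes D :: "('d::finite) obs measure"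
  assumes v: "valid_obs D"
  shows "valid_obs (distr D obs_space sw)"
    and "\<And>t. distr (distr D obs_space sw) lborel (xy t) = distr D lborel (xy (\<not>t))"
proof -
  have s: "sets D = sets obs_space" using v by (simp add: valid_obs_def)
  have sp: "space D = UNIV" using sets_eq_imp_space_eq[OF s] by simp
  have m: "sw \<in> measurable D obs_space" using sw_meas measurable_cong_sets[OF s refl] by blast
  have dd: "distr (distr D obs_space sw) lborel (xy t) = distr D lborel (xy (\<not>t))" for t
  proof -
    have "distr (distr D obs_space sw) lborel (xy t) = distr D lborel (xy t \<circ> sw)"
      by (rule distr_distr[OF xy_meas_l m])
    also have "xy t \<circ> sw = xy (\<not> t)" by (auto simp: xy_def sw_def)
    finally show ?thesis .
  qed
  show "\<And>t. distr (distr D obs_space sw) lborel (xy t) = distr D lborel (xy (\<not>t))" by (rule dd)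
  have ps: "prob_space D" using v by (simp add: valid_obs_def)
  have i: "integrable D (\<lambda>(x,t,y0,y1). y0)" "integrable D (\<lambda>(x,t,y0,y1). y1)" using v by (auto simp: valid_obs_def)
  have g0: "(\<lambda>(x::real^'d,t::bool,y0::real,y1::real). y0) \<in> borel_measurable obs_space"
    unfolding obs_space_def by measurable
  have g1: "(\<lambda>(x::real^'d,t::bool,y0::real,y1::real). y1) \<in> borel_measurable obs_space"
    unfolding obs_space_def by measurable
  have "integrable (distr D obs_space sw) (\<lambda>(x,t,y0,y1). y0)"
    apply (subst integrable_distr_eq[OF m g0])
    using i(2) by (simp add: sw_def split_beta')
  moreover have "integrable (distr D obs_space sw) (\<lambda>(x,t,y0,y1). y1)"
    apply (subst integrable_distr_eq[OF m g1])
    using i(1) by (simp add: sw_def split_beta')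
  moreover have "\<exists>f. is_density f \<and> distr (distr D obs_space sw) lborel (xy t) = dist_of f" for t
    using v unfolding valid_obs_def dd by blast
  ultimately show "valid_obs (distr D obs_space sw)"
    unfolding valid_obs_def using prob_space.prob_space_distr[OF ps m] by auto
qed

lemma swap_gps:
  fixes D :: "('d::finite) obs measure"
  assumes v: "valid_obs D" and g: "gps_dens D t p f"
  shows "gps_dens (distr D obs_space sw) (\<not>t) p f"
proof -
  have s: "sets D = sets obs_space" using v by (simp add: valid_obs_def)
  have sp: "space D = UNIV" using sets_eq_imp_space_eq[OF s] by simp
  have m: "sw \<in> measurable D obs_space" using sw_meas measurable_cong_sets[OF s refl] by blast
  have "emeasure (distr D obs_space sw) {\<omega>\<in>space (distr D obs_space sw). fst (snd \<omega>) = (\<not>t) \<and> xy (\<not>t) \<omega> \<in> A}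
        = emeasure D {\<omega>\<in>space D. fst (snd \<omega>) = t \<and> xy t \<omega> \<in> A}" if A: "A \<in> sets lborel" for A
  proof -
    have "emeasure (distr D obs_space sw) {\<omega>\<in>space (distr D obs_space sw). fst (snd \<omega>) = (\<not>t) \<and> xy (\<not>t) \<omega> \<in> A}
       = emeasure (distr D obs_space sw) {\<omega>. fst (snd \<omega>) = (\<not>t) \<and> xy (\<not>t) \<omega> \<in> A}" by simp
    also have "\<dots> = emeasure D (sw -` {\<omega>. fst (snd \<omega>) = (\<not>t) \<and> xy (\<not>t) \<omega> \<in> A} \<inter> space D)"
      by (rule emeasure_distr[OF m]) (use obs_set_meas A in simp)
    also have "sw -` {\<omega>. fst (snd \<omega>) = (\<not>t) \<and> xy (\<not>t) \<omega> \<in> A} \<inter> space D = {\<omega>\<in>space D. fst (snd \<omega>) = t \<and> xy t \<omega> \<in> A}"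
      by (auto simp: sp sw_def xy_def split: if_splits)
    finally show ?thesis .
  qed
  moreover have "distr (distr D obs_space sw) lborel (xy (\<not>t)) = dist_of f"
    using swap_valid(2)[OF v, of "\<not>t"] g by (simp add: gps_dens_def)
  ultimately show ?thesis using g unfolding gps_dens_def by simp
qed

lemma dir1:
  fixes PP DD :: "('d::finite) cofun set" and D D' :: "'d obs measure"
  assumes PPb: "\<forall>p\<in>PP. \<forall>z. 0 \<le> p z \<and> p z \<le> 1"
    and IC: "identifiability_condition PP DD"
    and r: "realizable PP DD D" and r': "realizable PP DD D'"
    and ce: "censor D = censor D'"
  shows "ate D = ate D'"
proof -
  obtain p0 p1 f0 f1 where h: "p0 \<in> PP" "p1 \<in> PP" "f0 \<in> DD" "f1 \<in> DD"
     "gps_dens D False p0 f0" "gps_dens D True p1 f1" and v: "valid_obs D"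
    using r unfolding realizable_def by blast
  obtain p0' p1' f0' f1' where h': "p0' \<in> PP" "p1' \<in> PP" "f0' \<in> DD" "f1' \<in> DD"
     "gps_dens D' False p0' f0'" "gps_dens D' True p1' f1'" and v': "valid_obs D'"
    using r' unfolding realizable_def by blast
  have s: "sets D = sets obs_space" "sets D' = sets obs_space" using v v' by (auto simp: valid_obs_def)
  have nueq: "nu D t A = nu D' t A" if "A \<in> sets borel" for t A
    using nu_censor[OF s(1) that] nu_censor[OF s(2) that] ce by simp
  have fst_eq: "distr D borel fst = distr D' borel fst"
    using censor_fst[OF s(1)] censor_fst[OF s(2)] ce by simp
  have key: "mean_outcome f = mean_outcome f'"
    if g: "gps_dens D t p f" and g': "gps_dens D' t p' f'" and c: "compatible PP DD p f"
      and c': "compatible PP DD p' f'" and pb: "p \<in> PP" "p' \<in> PP" for t p f p' f'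
  proof -
    have nn: "0 \<le> p z * f z" "0 \<le> p' z * f' z" for z
    proof -
      have "0 \<le> p z" "0 \<le> p' z" using pb PPb by (metis prod.collapse)+
      moreover have "0 \<le> f z" "0 \<le> f' z" using g g' unfolding gps_dens_def is_density_def by (metis prod.collapse)+
      ultimately show "0 \<le> p z * f z" "0 \<le> p' z * f' z" by auto
    qed
    have ae: "AE z in lborel. p z * f z = p' z * f' z"
      by (rule dens_AE_eq[OF g g' nueq nn]) auto
    have "marg f = marg f'"
      using marg_distr[OF s(1)] marg_distr[OF s(2)] g g' fst_eq unfolding gps_dens_def by metis
    moreover have "AE z in lborel. z \<in> msupp (marg f) \<times> UNIV \<longrightarrow> p z * f z = p' z * f' z"
      using ae by eventually_elim auto
    ultimately show ?thesis using IC c c' unfolding identifiability_condition_def by blast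
  qed
  have c0: "compatible PP DD p0 f0" unfolding compatible_def using h v by blast
  have c0': "compatible PP DD p0' f0'" unfolding compatible_def using h' v' by blast
  have c1: "compatible PP DD p1 f1" unfolding compatible_def
    using h swap_valid(1)[OF v] swap_gps[OF v h(6)] swap_gps[OF v h(5)] by fastforce
  have c1': "compatible PP DD p1' f1'" unfolding compatible_def
    using h' swap_valid(1)[OF v'] swap_gps[OF v' h'(6)] swap_gps[OF v' h'(5)] by fastforce
  have "mean_outcome f0 = mean_outcome f0'" by (rule key[OF h(5) h'(5) c0 c0' h(1) h'(1)])
  moreover have "mean_outcome f1 = mean_outcome f1'" by (rule key[OF h(6) h'(6) c1 c1' h(2) h'(2)])
  ultimately show ?thesis
    using ate_mean[OF v, of f0 f1] ate_mean[OF v', of f0' f1'] h h' unfolding gps_dens_def by simp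
qed

lemma dir1':
  fixes PP DD :: "('d::finite) cofun set"
  assumes PPb: "\<forall>p\<in>PP. \<forall>z. 0 \<le> p z \<and> p z \<le> 1"
    and IC: "identifiability_condition PP DD"
  shows "ate_identifiable PP DD"
proof -
  define F where "F C = (SOME r. \<exists>D. realizable PP DD D \<and> censor D = C \<and> ate D = r)" for C :: "'d cens measure"
  have "F (censor D) = ate D" if r: "realizable PP DD D" for D
  proof -
    have "\<exists>D'. realizable PP DD D' \<and> censor D' = censor D \<and> ate D' = F (censor D)"
      unfolding F_def by (rule someI_ex[of "\<lambda>r. \<exists>D'. realizable PP DD D' \<and> censor D' = censor D \<and> ate D' = r"]) (use r in blast)
    then obtain D' where "realizable PP DD D'" "censor D' = censor D" "ate D' = F (censor D)" by blast
    with dir1[OF PPb IC r this(1)] show ?thesis by simp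
  qed
  then show ?thesis unfolding ate_identifiable_def by blast
qed

lemma ton:
  fixes h :: "('a::euclidean_space \<times> 'b::euclidean_space) \<Rightarrow> ennreal"
  assumes "h \<in> borel_measurable borel"
  shows "(\<integral>\<^sup>+z. h z \<partial>lborel) = (\<integral>\<^sup>+x. \<integral>\<^sup>+y. h (x,y) \<partial>lborel \<partial>lborel)"
proof -
  have "h \<in> borel_measurable (lborel \<Otimes>\<^sub>M lborel)" using assms by (simp add: lborel_prod)
  from lborel.nn_integral_fst[OF this] show ?thesis by (simp add: lborel_prod)
qed

lemma supp_null:
  fixes \<mu> :: "(real^'d::finite) measure"
  assumes s: "sets \<mu> = sets borel"
  shows "open (- msupp \<mu>)" "emeasure \<mu> (- msupp \<mu>) = 0"
proof -
  define F where "F = {ball x e | x e. 0 < e \<and> emeasure \<mu> (ball x e) = 0}"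
  have bs: "ball x e \<in> sets \<mu>" for x e using s by simp
  have "\<Union>F = - msupp \<mu>"
  proof
    show "\<Union>F \<subseteq> - msupp \<mu>"
    proof
      fix y assume "y \<in> \<Union>F"
      then obtain x e where y: "y \<in> ball x e" "0 < e" "emeasure \<mu> (ball x e) = 0" unfolding F_def by blast
      have "ball y (e - dist x y) \<subseteq> ball x e"
      proof
        fix z assume "z \<in> ball y (e - dist x y)"
        then have "dist y z < e - dist x y" by simp
        then have "dist x z < e" using dist_triangle[of x z y] by linarith
        then show "z \<in> ball x e" by simp
      qed
      then have "emeasure \<mu> (ball y (e - dist x y)) = 0"
        using emeasure_mono[OF _ bs, of "ball y (e - dist x y)" x e] y(3) by simp
      moreover have "0 < e - dist x y" using y by simp
      ultimately have "\<not> (\<forall>e>0. emeasure \<mu> (ball y e) \<noteq> 0)" by blast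
      then show "y \<in> - msupp \<mu>" unfolding msupp_def by simp
    qed
    show "- msupp \<mu> \<subseteq> \<Union>F"
    proof
      fix y assume "y \<in> - msupp \<mu>"
      then obtain e where "0 < e" "emeasure \<mu> (ball y e) = 0" unfolding msupp_def by auto
      then have "ball y e \<in> F" unfolding F_def by blast
      moreover have "y \<in> ball y e" using \<open>0 < e\<close> by simp
      ultimately show "y \<in> \<Union>F" by blast
    qed
  qed
  moreover have op: "\<And>S. S \<in> F \<Longrightarrow> open S" unfolding F_def by auto
  moreover have "open (\<Union>F)" using op by (intro open_Union) blast
  ultimately show "open (- msupp \<mu>)" by simp
  obtain F' where F': "F' \<subseteq> F" "countable F'" "\<Union>F' = \<Union>F" using Lindelof[OF op] by blast
  have "(\<Union>i\<in>F'. i) \<in> null_sets \<mu>"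
    apply (rule null_sets_UN'[OF F'(2)])
    using F'(1) bs unfolding F_def by auto
  then show "emeasure \<mu> (- msupp \<mu>) = 0" using F' \<open>\<Union>F = - msupp \<mu>\<close> by (simp add: null_sets_def)
qed

lemma Lmain:
  fixes u v :: "('a::euclidean_space \<times> real) \<Rightarrow> ennreal" and A :: "('a \<times> real) set"
  assumes um: "u \<in> borel_measurable borel" and vm: "v \<in> borel_measurable borel"
    and eq: "AE x in lborel. (\<integral>\<^sup>+y. u (x,y) \<partial>lborel) = (\<integral>\<^sup>+y. v (x,y) \<partial>lborel)"
    and fin: "AE x in lborel. (\<integral>\<^sup>+y. u (x,y) \<partial>lborel) \<noteq> \<top>"
    and A: "A \<in> sets borel"
  defines "G \<equiv> \<lambda>x y0 y1. (if (\<integral>\<^sup>+y. u (x,y) \<partial>lborel) = 0 then 0 else u (x,y0) * v (x,y1) * inverse (\<integral>\<^sup>+y. u (x,y) \<partial>lborel))"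
  shows "(\<integral>\<^sup>+x. \<integral>\<^sup>+y0. \<integral>\<^sup>+y1. indicator A (x,y0) * G x y0 y1 \<partial>lborel \<partial>lborel \<partial>lborel) = (\<integral>\<^sup>+z\<in>A. u z \<partial>lborel)"
    and "(\<integral>\<^sup>+x. \<integral>\<^sup>+y0. \<integral>\<^sup>+y1. indicator A (x,y1) * G x y0 y1 \<partial>lborel \<partial>lborel \<partial>lborel) = (\<integral>\<^sup>+z\<in>A. v z \<partial>lborel)"
proof -
  define c where "c x = (\<integral>\<^sup>+y. u (x,y) \<partial>lborel)" for x
  note um[measurable] vm[measurable] A[measurable]
  have um2[measurable]: "u \<in> borel_measurable (borel \<Otimes>\<^sub>M borel)" using um unfolding borel_prod .
  have vm2[measurable]: "v \<in> borel_measurable (borel \<Otimes>\<^sub>M borel)" using vm unfolding borel_prod .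
  have Am[measurable]: "A \<in> sets (borel \<Otimes>\<^sub>M borel)" using A unfolding borel_prod .
  have ux[measurable]: "(\<lambda>y. u (x,y)) \<in> borel_measurable borel" for x by measurable
  have vx[measurable]: "(\<lambda>y. v (x,y)) \<in> borel_measurable borel" for x by measurable
  have Gx: "G x y0 y1 = (if c x = 0 then 0 else u (x,y0) * inverse (c x) * v (x,y1))" for x y0 y1
    unfolding G_def c_def by (simp only: mult.commute mult.left_commute)
  have Gx': "G x y0 y1 = (if c x = 0 then 0 else v (x,y1) * inverse (c x) * u (x,y0))" for x y0 y1
    unfolding G_def c_def by (simp only: mult.commute mult.left_commute)
  have zero: "(\<integral>\<^sup>+y. indicator A (x,y) * u (x,y) \<partial>lborel) = 0" if "c x = 0" for x
  proof -
    have "AE y in lborel. u (x,y) = 0" using that unfolding c_def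
      by (subst nn_integral_0_iff_AE[symmetric]) (auto simp: measurable_lborel1)
    then have "AE y in lborel. indicator A (x,y) * u (x,y) = 0" by eventually_elim simp
    then show ?thesis by (subst nn_integral_0_iff_AE) (auto simp: measurable_lborel1)
  qed
  have zero': "(\<integral>\<^sup>+y. indicator A (x,y) * v (x,y) \<partial>lborel) = 0" if "c x = 0" "c x = (\<integral>\<^sup>+y. v (x,y) \<partial>lborel)" for x
  proof -
    have "AE y in lborel. v (x,y) = 0" using that
      by (subst nn_integral_0_iff_AE[symmetric]) (auto simp: measurable_lborel1)
    then have "AE y in lborel. indicator A (x,y) * v (x,y) = 0" by eventually_elim simp
    then show ?thesis by (subst nn_integral_0_iff_AE) (auto simp: measurable_lborel1)
  qed
  have fin_prod: "(\<integral>\<^sup>+z\<in>A. u z \<partial>lborel) = (\<integral>\<^sup>+x. \<integral>\<^sup>+y. indicator A (x,y) * u (x,y) \<partial>lborel \<partial>lborel)"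
    apply (subst ton) apply measurable by (simp add: mult.commute)
  have fin_prodv: "(\<integral>\<^sup>+z\<in>A. v z \<partial>lborel) = (\<integral>\<^sup>+x. \<integral>\<^sup>+y. indicator A (x,y) * v (x,y) \<partial>lborel \<partial>lborel)"
    apply (subst ton) apply measurable by (simp add: mult.commute)
  have inner1: "AE x in lborel. (\<integral>\<^sup>+y0. \<integral>\<^sup>+y1. indicator A (x,y0) * G x y0 y1 \<partial>lborel \<partial>lborel)
      = (\<integral>\<^sup>+y. indicator A (x,y) * u (x,y) \<partial>lborel)"
    using eq fin
  proof eventually_elim
    case (elim x)
    show ?case
    proof (cases "c x = 0")
      case True
      then show ?thesis using zero[OF True] by (simp add: Gx)
    next
      case False
      have "(\<integral>\<^sup>+y0. \<integral>\<^sup>+y1. indicator A (x,y0) * G x y0 y1 \<partial>lborel \<partial>lborel)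
          = (\<integral>\<^sup>+y0. indicator A (x,y0) * u (x,y0) * inverse (c x) * (\<integral>\<^sup>+y1. v (x,y1) \<partial>lborel) \<partial>lborel)"
        apply (rule nn_integral_cong)
        apply (simp add: Gx False mult.assoc[symmetric])
        apply (subst nn_integral_cmult)
        by (auto simp: measurable_lborel1 mult.assoc)
      also have "\<dots> = (\<integral>\<^sup>+y0. indicator A (x,y0) * u (x,y0) * (inverse (c x) * c x) \<partial>lborel)"
        using elim by (simp add: c_def mult.assoc)
      also have "inverse (c x) * c x = 1"
      proof -
        have "c x < top" using elim(2) by (simp add: c_def top.not_eq_extremum)
        then have "c x / c x = 1" using False by simp
        then show ?thesis by (simp add: divide_ennreal_def mult.commute)
      qed
      finally show ?thesis by simp
    qed
  qed
  show "(\<integral>\<^sup>+x. \<integral>\<^sup>+y0. \<integral>\<^sup>+y1. indicator A (x,y0) * G x y0 y1 \<partial>lborel \<partial>lborel \<partial>lborel) = (\<integral>\<^sup>+z\<in>A. u z \<partial>lborel)"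
    unfolding fin_prod by (rule nn_integral_cong_AE[OF inner1])
  have inner2: "AE x in lborel. (\<integral>\<^sup>+y0. \<integral>\<^sup>+y1. indicator A (x,y1) * G x y0 y1 \<partial>lborel \<partial>lborel)
      = (\<integral>\<^sup>+y. indicator A (x,y) * v (x,y) \<partial>lborel)"
    using eq fin
  proof eventually_elim
    case (elim x)
    have Gm: "(\<lambda>(y0,y1). indicator A (x,y1) * G x y0 y1) \<in> borel_measurable (lborel \<Otimes>\<^sub>M lborel)"
      unfolding Gx' by measurable
    have sw: "(\<integral>\<^sup>+y0. \<integral>\<^sup>+y1. indicator A (x,y1) * G x y0 y1 \<partial>lborel \<partial>lborel)
        = (\<integral>\<^sup>+y1. \<integral>\<^sup>+y0. indicator A (x,y1) * G x y0 y1 \<partial>lborel \<partial>lborel)"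
      using lborel_pair.Fubini[OF Gm] by simp
    show ?case
    proof (cases "c x = 0")
      case True
      then show ?thesis using zero'[OF True] elim unfolding sw by (simp add: Gx c_def)
    next
      case False
      have "(\<integral>\<^sup>+y1. \<integral>\<^sup>+y0. indicator A (x,y1) * G x y0 y1 \<partial>lborel \<partial>lborel)
          = (\<integral>\<^sup>+y1. indicator A (x,y1) * v (x,y1) * inverse (c x) * (\<integral>\<^sup>+y0. u (x,y0) \<partial>lborel) \<partial>lborel)"
        apply (rule nn_integral_cong)
        apply (simp add: Gx' False mult.assoc[symmetric])
        apply (subst nn_integral_cmult)
        by (auto simp: measurable_lborel1 mult.assoc)
      also have "\<dots> = (\<integral>\<^sup>+y1. indicator A (x,y1) * v (x,y1) * (inverse (c x) * c x) \<partial>lborel)"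
        by (simp add: c_def mult.assoc)
      also have "inverse (c x) * c x = 1"
      proof -
        have "c x < top" using elim(2) by (simp add: c_def top.not_eq_extremum)
        then have "c x / c x = 1" using False by simp
        then show ?thesis by (simp add: divide_ennreal_def mult.commute)
      qed
      finally show ?thesis unfolding sw by simp
    qed
  qed
  show "(\<integral>\<^sup>+x. \<integral>\<^sup>+y0. \<integral>\<^sup>+y1. indicator A (x,y1) * G x y0 y1 \<partial>lborel \<partial>lborel \<partial>lborel) = (\<integral>\<^sup>+z\<in>A. v z \<partial>lborel)"
    unfolding fin_prodv by (rule nn_integral_cong_AE[OF inner2])
qed

lemma sf2: "sigma_finite_measure (lborel \<Otimes>\<^sub>M lborel :: (real \<times> real) measure)"
  by (rule sigma_finite_pair_measure) (rule sigma_finite_lborel)+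

lemma sf3: "sigma_finite_measure (count_space UNIV \<Otimes>\<^sub>M (lborel \<Otimes>\<^sub>M lborel) :: (bool \<times> real \<times> real) measure)"
  by (rule sigma_finite_pair_measure) (rule sigma_finite_measure_count_space, rule sf2)

lemma N_int:
  fixes h :: "('d::finite) obs \<Rightarrow> ennreal"
  assumes hm: "h \<in> borel_measurable (lborel \<Otimes>\<^sub>M (count_space UNIV \<Otimes>\<^sub>M (lborel \<Otimes>\<^sub>M lborel)))"
  shows "integral\<^sup>N (lborel \<Otimes>\<^sub>M (count_space UNIV \<Otimes>\<^sub>M (lborel \<Otimes>\<^sub>M lborel))) h
    = (\<integral>\<^sup>+x. (\<integral>\<^sup>+y0. \<integral>\<^sup>+y1. h (x,True,y0,y1) \<partial>lborel \<partial>lborel) + (\<integral>\<^sup>+y0. \<integral>\<^sup>+y1. h (x,False,y0,y1) \<partial>lborel \<partial>lborel) \<partial>lborel)"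
proof -
  have "integral\<^sup>N (lborel \<Otimes>\<^sub>M (count_space UNIV \<Otimes>\<^sub>M (lborel \<Otimes>\<^sub>M lborel))) h
     = (\<integral>\<^sup>+x. \<integral>\<^sup>+r. h (x,r) \<partial>(count_space UNIV \<Otimes>\<^sub>M (lborel \<Otimes>\<^sub>M lborel)) \<partial>lborel)"
    using sigma_finite_measure.nn_integral_fst[OF sf3 hm] by simp
  also have "\<dots> = (\<integral>\<^sup>+x. (\<integral>\<^sup>+y0. \<integral>\<^sup>+y1. h (x,True,y0,y1) \<partial>lborel \<partial>lborel) + (\<integral>\<^sup>+y0. \<integral>\<^sup>+y1. h (x,False,y0,y1) \<partial>lborel \<partial>lborel) \<partial>lborel)"
  proof (rule nn_integral_cong)
    fix x :: "real^'d"
    have h1: "(\<lambda>r. h (x,r)) \<in> borel_measurable (count_space UNIV \<Otimes>\<^sub>M (lborel \<Otimes>\<^sub>M lborel))"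
      using measurable_compose_Pair1[OF _ hm] by simp
    have "(\<integral>\<^sup>+r. h (x,r) \<partial>(count_space UNIV \<Otimes>\<^sub>M (lborel \<Otimes>\<^sub>M lborel)))
        = (\<integral>\<^sup>+t. \<integral>\<^sup>+yy. h (x,t,yy) \<partial>(lborel \<Otimes>\<^sub>M lborel) \<partial>count_space UNIV)"
      using sigma_finite_measure.nn_integral_fst[OF sf2 h1] by simp
    also have "\<dots> = (\<integral>\<^sup>+yy. h (x,True,yy) \<partial>(lborel \<Otimes>\<^sub>M lborel)) + (\<integral>\<^sup>+yy. h (x,False,yy) \<partial>(lborel \<Otimes>\<^sub>M lborel))"
      by (subst nn_integral_count_space_finite) (auto simp: UNIV_bool add.commute)
    moreover have tt: "(\<integral>\<^sup>+yy. h (x,t,yy) \<partial>(lborel \<Otimes>\<^sub>M lborel)) = (\<integral>\<^sup>+y0. \<integral>\<^sup>+y1. h (x,t,y0,y1) \<partial>lborel \<partial>lborel)" for t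
    proof -
      have "(\<lambda>yy. h (x,t,yy)) \<in> borel_measurable (lborel \<Otimes>\<^sub>M lborel)"
        using measurable_compose_Pair1[OF _ h1] by simp
      from lborel.nn_integral_fst[OF this] show ?thesis by simp
    qed
    ultimately show "(\<integral>\<^sup>+r. h (x,r) \<partial>(count_space UNIV \<Otimes>\<^sub>M (lborel \<Otimes>\<^sub>M lborel)))
       = (\<integral>\<^sup>+y0. \<integral>\<^sup>+y1. h (x,True,y0,y1) \<partial>lborel \<partial>lborel) + (\<integral>\<^sup>+y0. \<integral>\<^sup>+y1. h (x,False,y0,y1) \<partial>lborel \<partial>lborel)" by simp
  qed
  finally show ?thesis .
qed

lemma BU_sets:
  assumes B: "B \<in> sets (borel :: ('a::second_countable_topology) measure)"
  shows "B \<times> UNIV \<in> sets (borel :: ('a \<times> 'b::second_countable_topology) measure)"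
proof -
  have "fst -` B \<inter> space (borel :: ('a \<times> 'b) measure) \<in> sets borel"
    by (rule measurable_sets[OF _ B]) (auto intro!: borel_measurable_continuous_onI continuous_intros)
  moreover have "fst -` B \<inter> space (borel :: ('a \<times> 'b) measure) = B \<times> UNIV" by auto
  ultimately show ?thesis by simp
qed

lemma marg_emeasure:
  fixes f :: "('d::finite) cofun"
  assumes f: "is_density f" and B: "B \<in> sets borel"
  shows "emeasure (marg f) B = (\<integral>\<^sup>+z\<in>B\<times>UNIV. ennreal (f z) \<partial>lborel)"
proof -
  have "measurable (dist_of f) (borel :: (real^'d) measure) = measurable borel borel"
    by (rule measurable_cong_sets) (auto simp: dist_of_def)
  moreover have "fst \<in> measurable (borel :: ((real^'d) \<times> real) measure) (borel :: (real^'d) measure)"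
    by (auto intro!: borel_measurable_continuous_onI continuous_intros)
  ultimately have fm: "fst \<in> measurable (dist_of f) (borel :: (real^'d) measure)" by simp
  have BU: "B \<times> UNIV \<in> sets (lborel :: ((real^'d) \<times> real) measure)"
    using BU_sets[OF B] by simp
  have "emeasure (marg f) B = emeasure (dist_of f) (fst -` B \<inter> space (dist_of f))"
    unfolding marg_def by (rule emeasure_distr[OF fm B])
  also have "fst -` B \<inter> space (dist_of f) = B \<times> UNIV" by (auto simp: dist_of_def)
  also have "emeasure (dist_of f) (B \<times> UNIV) = (\<integral>\<^sup>+z\<in>B\<times>UNIV. ennreal (f z) \<partial>lborel)"
    unfolding dist_of_def using f BU by (subst emeasure_density) (auto simp: is_density_def)
  finally show ?thesis .
qed

lemma ton_B:
  fixes h :: "((real^'d::finite) \<times> real) \<Rightarrow> ennreal"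
  assumes hm: "h \<in> borel_measurable borel" and B: "B \<in> sets borel"
  shows "(\<integral>\<^sup>+z\<in>B\<times>UNIV. h z \<partial>lborel) = (\<integral>\<^sup>+x\<in>B. (\<integral>\<^sup>+y. h (x,y) \<partial>lborel) \<partial>lborel)"
proof -
  have BU[measurable]: "B \<times> UNIV \<in> sets (borel :: ((real^'d) \<times> real) measure)" by (rule BU_sets[OF B])
  note hm[measurable]
  have "(\<lambda>z. h z * indicator (B\<times>UNIV) z) \<in> borel_measurable borel" by measurable
  then have "(\<integral>\<^sup>+z\<in>B\<times>UNIV. h z \<partial>lborel) = (\<integral>\<^sup>+x. \<integral>\<^sup>+y. h (x,y) * indicator (B\<times>UNIV) (x,y) \<partial>lborel \<partial>lborel)"
    by (subst ton) auto
  also have "\<dots> = (\<integral>\<^sup>+x. (\<integral>\<^sup>+y. h (x,y) \<partial>lborel) * indicator B x \<partial>lborel)"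
    apply (rule nn_integral_cong)
    apply (subst nn_integral_multc[symmetric])
     apply (simp add: measurable_lborel1)
    by (simp add: indicator_def)
  finally show ?thesis .
qed

lemma AE_from_sets:
  fixes u v :: "((real^'d::finite) \<times> real) \<Rightarrow> ennreal"
  assumes um: "u \<in> borel_measurable borel" and vm: "v \<in> borel_measurable borel"
    and eq: "\<And>B. B \<in> sets borel \<Longrightarrow> (\<integral>\<^sup>+z\<in>B\<times>UNIV. u z \<partial>lborel) = (\<integral>\<^sup>+z\<in>B\<times>UNIV. v z \<partial>lborel)"
  shows "AE x in lborel. (\<integral>\<^sup>+y. u (x,y) \<partial>lborel) = (\<integral>\<^sup>+y. v (x,y) \<partial>lborel)"
proof -
  have um2[measurable]: "u \<in> borel_measurable (lborel \<Otimes>\<^sub>M lborel)" using um unfolding lborel_prod by (simp add: measurable_lborel1)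
  have vm2[measurable]: "v \<in> borel_measurable (lborel \<Otimes>\<^sub>M lborel)" using vm unfolding lborel_prod by (simp add: measurable_lborel1)
  have m: "(\<lambda>x. \<integral>\<^sup>+y. u (x,y) \<partial>lborel) \<in> borel_measurable lborel" "(\<lambda>x. \<integral>\<^sup>+y. v (x,y) \<partial>lborel) \<in> borel_measurable lborel"
    using lborel.borel_measurable_nn_integral_fst[OF um2] lborel.borel_measurable_nn_integral_fst[OF vm2] by auto
  have "density lborel (\<lambda>x. \<integral>\<^sup>+y. u (x,y) \<partial>lborel) = density lborel (\<lambda>x. \<integral>\<^sup>+y. v (x,y) \<partial>lborel)"
  proof (rule measure_eqI)
    fix A assume "A \<in> sets (density lborel (\<lambda>x. \<integral>\<^sup>+y. u (x,y) \<partial>lborel))"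
    then have A: "A \<in> sets borel" by simp
    have "emeasure (density lborel (\<lambda>x. \<integral>\<^sup>+y. u (x,y) \<partial>lborel)) A = (\<integral>\<^sup>+x\<in>A. (\<integral>\<^sup>+y. u (x,y) \<partial>lborel) \<partial>lborel)"
      using m A by (subst emeasure_density) auto
    also have "\<dots> = (\<integral>\<^sup>+z\<in>A\<times>UNIV. u z \<partial>lborel)" using ton_B[OF um A] by simp
    also have "\<dots> = (\<integral>\<^sup>+z\<in>A\<times>UNIV. v z \<partial>lborel)" using eq[OF A] .
    also have "\<dots> = (\<integral>\<^sup>+x\<in>A. (\<integral>\<^sup>+y. v (x,y) \<partial>lborel) \<partial>lborel)" using ton_B[OF vm A] by simp
    also have "\<dots> = emeasure (density lborel (\<lambda>x. \<integral>\<^sup>+y. v (x,y) \<partial>lborel)) A"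
      using m A by (subst emeasure_density) auto
    finally show "emeasure (density lborel (\<lambda>x. \<integral>\<^sup>+y. u (x,y) \<partial>lborel)) A = emeasure (density lborel (\<lambda>x. \<integral>\<^sup>+y. v (x,y) \<partial>lborel)) A" .
  qed simp
  then show ?thesis
    using m by (intro sigma_finite_measure.density_unique[OF sigma_finite_lborel]) auto
qed

lemma obs_set_meas2: "A \<in> sets borel \<Longrightarrow> {\<omega>. fst (snd \<omega>) = t \<and> xy s \<omega> \<in> A} \<in> sets (obs_space::('d::finite) obs measure)"
proof -
  assume A: "A \<in> sets borel"
  have "(\<lambda>c::'d obs. fst (snd c)) \<in> measurable obs_space (count_space UNIV)"
    unfolding obs_space_def by measurable
  then have "{c\<in>space obs_space. fst (snd c) = t \<and> xy s c \<in> (A::((real^'d)\<times>real) set)} \<in> sets (obs_space::'d obs measure)"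
    using A by measurable
  then show ?thesis by simp
qed

lemma construct:
  fixes q Q ph Ph :: "('d::finite) cofun"
  assumes qm: "q \<in> borel_measurable borel" and phm: "ph \<in> borel_measurable borel"
    and Qd: "is_density Q" and Phd: "is_density Ph"
    and qb: "\<forall>z. 0 \<le> q z \<and> q z \<le> 1" and phb: "\<forall>z. 0 \<le> ph z \<and> ph z \<le> 1"
    and F1: "AE x in lborel. (\<integral>\<^sup>+y. ennreal (q (x,y) * Q (x,y)) \<partial>lborel) = (\<integral>\<^sup>+y. ennreal ((1 - ph (x,y)) * Ph (x,y)) \<partial>lborel)"
    and F2: "AE x in lborel. (\<integral>\<^sup>+y. ennreal ((1 - q (x,y)) * Q (x,y)) \<partial>lborel) = (\<integral>\<^sup>+y. ennreal (ph (x,y) * Ph (x,y)) \<partial>lborel)"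
  obtains D :: "'d obs measure" where "sets D = sets obs_space" "prob_space D"
    "\<And>A. A \<in> sets borel \<Longrightarrow> nu D False A = (\<integral>\<^sup>+z\<in>A. ennreal (q z * Q z) \<partial>lborel)"
    "\<And>A. A \<in> sets borel \<Longrightarrow> nu D True A = (\<integral>\<^sup>+z\<in>A. ennreal (ph z * Ph z) \<partial>lborel)"
    "distr D lborel (xy False) = dist_of Q" "distr D lborel (xy True) = dist_of Ph"
proof -
  define u0 where "u0 z = ennreal (q z * Q z)" for z
  define v0 where "v0 z = ennreal ((1 - ph z) * Ph z)" for z
  define u1 where "u1 z = ennreal ((1 - q z) * Q z)" for z
  define v1 where "v1 z = ennreal (ph z * Ph z)" for z
  have Qm: "Q \<in> borel_measurable borel" and Phm: "Ph \<in> borel_measurable borel"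
    using Qd Phd by (auto simp: is_density_def measurable_lborel1)
  note qm[measurable] phm[measurable] Qm[measurable] Phm[measurable]
  have um[measurable]: "u0 \<in> borel_measurable borel" "v0 \<in> borel_measurable borel" "u1 \<in> borel_measurable borel" "v1 \<in> borel_measurable borel"
    unfolding u0_def v0_def u1_def v1_def by measurable
  have Qn: "0 \<le> Q z" "0 \<le> Ph z" for z using Qd Phd unfolding is_density_def by blast+
  have qb': "0 \<le> q z" "q z \<le> 1" "0 \<le> ph z" "ph z \<le> 1" for z using qb phb by blast+
  have Q1: "(\<integral>\<^sup>+z. ennreal (Q z) \<partial>lborel) = 1" using Qd unfolding is_density_def by auto
  have fin: "AE x in lborel. (\<integral>\<^sup>+y. u (x,y) \<partial>lborel) \<noteq> \<top>"
    if u: "u \<in> borel_measurable borel" and ule: "\<And>z. u z \<le> ennreal (Q z)" for u :: "((real^'d) \<times> real) \<Rightarrow> ennreal"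
  proof -
    have u2: "u \<in> borel_measurable (lborel \<Otimes>\<^sub>M lborel)" using u unfolding lborel_prod by (simp add: measurable_lborel1)
    have "(\<integral>\<^sup>+x. (\<integral>\<^sup>+y. u (x,y) \<partial>lborel) \<partial>lborel) = (\<integral>\<^sup>+z. u z \<partial>lborel)" using ton[OF u] by simp
    also have "\<dots> \<le> (\<integral>\<^sup>+z. ennreal (Q z) \<partial>lborel)" by (rule nn_integral_mono) (rule ule)
    finally have "(\<integral>\<^sup>+x. (\<integral>\<^sup>+y. u (x,y) \<partial>lborel) \<partial>lborel) \<noteq> \<top>" using Q1 by (auto simp: top_unique)
    then show ?thesis
      using nn_integral_PInf_AE[OF lborel.borel_measurable_nn_integral_fst[OF u2]] by simp
  qed
  have fin0: "AE x in lborel. (\<integral>\<^sup>+y. u0 (x,y) \<partial>lborel) \<noteq> \<top>"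
    by (rule fin[OF um(1)]) (use qb' Qn in \<open>auto simp: u0_def intro!: ennreal_leI mult_left_le_one_le\<close>)
  have fin1: "AE x in lborel. (\<integral>\<^sup>+y. u1 (x,y) \<partial>lborel) \<noteq> \<top>"
    by (rule fin[OF um(3)]) (use qb' Qn in \<open>auto simp: u1_def intro!: ennreal_leI mult_left_le_one_le\<close>)
  have eq0: "AE x in lborel. (\<integral>\<^sup>+y. u0 (x,y) \<partial>lborel) = (\<integral>\<^sup>+y. v0 (x,y) \<partial>lborel)"
    using F1 unfolding u0_def v0_def .
  have eq1: "AE x in lborel. (\<integral>\<^sup>+y. u1 (x,y) \<partial>lborel) = (\<integral>\<^sup>+y. v1 (x,y) \<partial>lborel)"
    using F2 unfolding u1_def v1_def .
  define G0 where "G0 \<equiv> \<lambda>x y0 y1. (if (\<integral>\<^sup>+y. u0 (x,y) \<partial>lborel) = 0 then 0 else u0 (x,y0) * v0 (x,y1) * inverse (\<integral>\<^sup>+y. u0 (x,y) \<partial>lborel))"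
  define G1 where "G1 \<equiv> \<lambda>x y0 y1. (if (\<integral>\<^sup>+y. u1 (x,y) \<partial>lborel) = 0 then 0 else u1 (x,y0) * v1 (x,y1) * inverse (\<integral>\<^sup>+y. u1 (x,y) \<partial>lborel))"
  define N where "N = (lborel \<Otimes>\<^sub>M (count_space UNIV \<Otimes>\<^sub>M (lborel \<Otimes>\<^sub>M lborel)) :: 'd obs measure)"
  define g where "g \<omega> = (if fst (snd \<omega>) then G1 (fst \<omega>) (fst (snd (snd \<omega>))) (snd (snd (snd \<omega>))) else G0 (fst \<omega>) (fst (snd (snd \<omega>))) (snd (snd (snd \<omega>))))" for \<omega> :: "'d obs"
  have um2[measurable]: "u0 \<in> borel_measurable (lborel \<Otimes>\<^sub>M lborel)" "v0 \<in> borel_measurable (lborel \<Otimes>\<^sub>M lborel)"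
      "u1 \<in> borel_measurable (lborel \<Otimes>\<^sub>M lborel)" "v1 \<in> borel_measurable (lborel \<Otimes>\<^sub>M lborel)"
    using um unfolding lborel_prod by (simp_all add: measurable_lborel1)
  have cm[measurable]: "(\<lambda>x. \<integral>\<^sup>+y. u0 (x,y) \<partial>lborel) \<in> borel_measurable lborel" "(\<lambda>x. \<integral>\<^sup>+y. u1 (x,y) \<partial>lborel) \<in> borel_measurable lborel"
    using lborel.borel_measurable_nn_integral_fst[OF um2(1)] lborel.borel_measurable_nn_integral_fst[OF um2(3)] by auto
  have gm: "g \<in> borel_measurable N"
    unfolding g_def G0_def G1_def N_def by measurable
  define D where "D = density N g"
  have sD: "sets D = sets obs_space" unfolding D_def N_def sets_density by (rule sets_obs[symmetric])
  have spD: "space D = UNIV" using sets_eq_imp_space_eq[OF sD] by simp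
  have four: "emeasure D {\<omega>. fst (snd \<omega>) = t \<and> xy s \<omega> \<in> A} = (\<integral>\<^sup>+x. \<integral>\<^sup>+y0. \<integral>\<^sup>+y1. indicator A (x, if s then y1 else y0) * (if t then G1 x y0 y1 else G0 x y0 y1) \<partial>lborel \<partial>lborel \<partial>lborel)"
    if A: "A \<in> sets borel" for t s A
  proof -
    have Sm: "{\<omega>. fst (snd \<omega>) = t \<and> xy s \<omega> \<in> A} \<in> sets N"
      unfolding N_def sets_obs[symmetric] by (rule obs_set_meas2[OF A])
    have gSm: "(\<lambda>\<omega>. g \<omega> * indicator {\<omega>. fst (snd \<omega>) = t \<and> xy s \<omega> \<in> A} \<omega>) \<in> borel_measurable N"
      using gm Sm by measurable
    have "emeasure D {\<omega>. fst (snd \<omega>) = t \<and> xy s \<omega> \<in> A} = (\<integral>\<^sup>+\<omega>. g \<omega> * indicator {\<omega>. fst (snd \<omega>) = t \<and> xy s \<omega> \<in> A} \<omega> \<partial>N)"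
      unfolding D_def by (rule emeasure_density[OF gm Sm])
    also have "\<dots> = (\<integral>\<^sup>+x. (\<integral>\<^sup>+y0. \<integral>\<^sup>+y1. g (x,True,y0,y1) * indicator {\<omega>. fst (snd \<omega>) = t \<and> xy s \<omega> \<in> A} (x,True,y0,y1) \<partial>lborel \<partial>lborel)
        + (\<integral>\<^sup>+y0. \<integral>\<^sup>+y1. g (x,False,y0,y1) * indicator {\<omega>. fst (snd \<omega>) = t \<and> xy s \<omega> \<in> A} (x,False,y0,y1) \<partial>lborel \<partial>lborel) \<partial>lborel)"
      using N_int[OF gSm[unfolded N_def]] unfolding N_def by simp
    also have "\<dots> = (\<integral>\<^sup>+x. \<integral>\<^sup>+y0. \<integral>\<^sup>+y1. indicator A (x, if s then y1 else y0) * (if t then G1 x y0 y1 else G0 x y0 y1) \<partial>lborel \<partial>lborel \<partial>lborel)"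
      apply (rule nn_integral_cong)
      by (cases t; cases s) (simp_all add: g_def indicator_def xy_def mult.commute)
    finally show ?thesis .
  qed
  have eFF: "emeasure D {\<omega>. fst (snd \<omega>) = False \<and> xy False \<omega> \<in> A} = (\<integral>\<^sup>+z\<in>A. u0 z \<partial>lborel)" if A: "A \<in> sets borel" for A
    using four[OF A, of False False] Lmain(1)[OF um(1) um(2) eq0 fin0 A] unfolding G0_def by simp
  have eFT: "emeasure D {\<omega>. fst (snd \<omega>) = False \<and> xy True \<omega> \<in> A} = (\<integral>\<^sup>+z\<in>A. v0 z \<partial>lborel)" if A: "A \<in> sets borel" for A
    using four[OF A, of False True] Lmain(2)[OF um(1) um(2) eq0 fin0 A] unfolding G0_def by simp
  have eTF: "emeasure D {\<omega>. fst (snd \<omega>) = True \<and> xy False \<omega> \<in> A} = (\<integral>\<^sup>+z\<in>A. u1 z \<partial>lborel)" if A: "A \<in> sets borel" for A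
    using four[OF A, of True False] Lmain(1)[OF um(3) um(4) eq1 fin1 A] unfolding G1_def by simp
  have eTT: "emeasure D {\<omega>. fst (snd \<omega>) = True \<and> xy True \<omega> \<in> A} = (\<integral>\<^sup>+z\<in>A. v1 z \<partial>lborel)" if A: "A \<in> sets borel" for A
    using four[OF A, of True True] Lmain(2)[OF um(3) um(4) eq1 fin1 A] unfolding G1_def by simp
  have xym: "xy s \<in> measurable D lborel" for s
    using xy_meas_l measurable_cong_sets[OF sD refl] by blast
  have split: "emeasure (distr D lborel (xy s)) A = emeasure D {\<omega>. fst (snd \<omega>) = False \<and> xy s \<omega> \<in> A} + emeasure D {\<omega>. fst (snd \<omega>) = True \<and> xy s \<omega> \<in> A}"
    if A: "A \<in> sets borel" for s A
  proof -
    have "emeasure (distr D lborel (xy s)) A = emeasure D (xy s -` A \<inter> space D)"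
      by (rule emeasure_distr[OF xym]) (use A in simp)
    also have "xy s -` A \<inter> space D = {\<omega>. fst (snd \<omega>) = False \<and> xy s \<omega> \<in> A} \<union> {\<omega>. fst (snd \<omega>) = True \<and> xy s \<omega> \<in> A}"
      by (auto simp: spD)
    also have "emeasure D \<dots> = emeasure D {\<omega>. fst (snd \<omega>) = False \<and> xy s \<omega> \<in> A} + emeasure D {\<omega>. fst (snd \<omega>) = True \<and> xy s \<omega> \<in> A}"
      apply (rule plus_emeasure[symmetric])
      using obs_set_meas2[OF A, of False s] obs_set_meas2[OF A, of True s] sD by auto
    finally show ?thesis .
  qed
  have sumQ: "(\<integral>\<^sup>+z\<in>A. u0 z \<partial>lborel) + (\<integral>\<^sup>+z\<in>A. u1 z \<partial>lborel) = (\<integral>\<^sup>+z\<in>A. ennreal (Q z) \<partial>lborel)"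
    if A: "A \<in> sets borel" for A
  proof -
    note A[measurable]
    have "(\<integral>\<^sup>+z\<in>A. u0 z \<partial>lborel) + (\<integral>\<^sup>+z\<in>A. u1 z \<partial>lborel) = (\<integral>\<^sup>+z. u0 z * indicator A z + u1 z * indicator A z \<partial>lborel)"
      by (rule nn_integral_add[symmetric]) (auto simp: measurable_lborel1)
    also have "\<dots> = (\<integral>\<^sup>+z\<in>A. ennreal (Q z) \<partial>lborel)"
    proof (rule nn_integral_cong)
      fix z
      have "u0 z + u1 z = ennreal (Q z)"
        unfolding u0_def u1_def using qb'[of z] Qn[of z]
        by (subst ennreal_plus[symmetric]) (auto simp: algebra_simps mult_left_le)
      then show "u0 z * indicator A z + u1 z * indicator A z = ennreal (Q z) * indicator A z"
        by (metis distrib_right)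
    qed
    finally show ?thesis .
  qed
  have sumPh: "(\<integral>\<^sup>+z\<in>A. v0 z \<partial>lborel) + (\<integral>\<^sup>+z\<in>A. v1 z \<partial>lborel) = (\<integral>\<^sup>+z\<in>A. ennreal (Ph z) \<partial>lborel)"
    if A: "A \<in> sets borel" for A
  proof -
    note A[measurable]
    have "(\<integral>\<^sup>+z\<in>A. v0 z \<partial>lborel) + (\<integral>\<^sup>+z\<in>A. v1 z \<partial>lborel) = (\<integral>\<^sup>+z. v0 z * indicator A z + v1 z * indicator A z \<partial>lborel)"
      by (rule nn_integral_add[symmetric]) (auto simp: measurable_lborel1)
    also have "\<dots> = (\<integral>\<^sup>+z\<in>A. ennreal (Ph z) \<partial>lborel)"
    proof (rule nn_integral_cong)
      fix z
      have "v0 z + v1 z = ennreal (Ph z)"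
        unfolding v0_def v1_def using qb'[of z] Qn[of z]
        by (subst ennreal_plus[symmetric]) (auto simp: algebra_simps mult_left_le)
      then show "v0 z * indicator A z + v1 z * indicator A z = ennreal (Ph z) * indicator A z"
        by (metis distrib_right)
    qed
    finally show ?thesis .
  qed
  have dF: "distr D lborel (xy False) = dist_of Q"
  proof (rule measure_eqI)
    show "sets (distr D lborel (xy False)) = sets (dist_of Q)" by (simp add: dist_of_def)
    fix A assume "A \<in> sets (distr D lborel (xy False))"
    then have A: "A \<in> sets borel" by simp
    have "emeasure (distr D lborel (xy False)) A = (\<integral>\<^sup>+z\<in>A. ennreal (Q z) \<partial>lborel)"
      using split[OF A, of False] eFF[OF A] eTF[OF A] sumQ[OF A] by simp
    also have "\<dots> = emeasure (dist_of Q) A"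
      unfolding dist_of_def using A Qm by (subst emeasure_density) (auto simp: measurable_lborel1)
    finally show "emeasure (distr D lborel (xy False)) A = emeasure (dist_of Q) A" .
  qed
  have dT: "distr D lborel (xy True) = dist_of Ph"
  proof (rule measure_eqI)
    show "sets (distr D lborel (xy True)) = sets (dist_of Ph)" by (simp add: dist_of_def)
    fix A assume "A \<in> sets (distr D lborel (xy True))"
    then have A: "A \<in> sets borel" by simp
    have "emeasure (distr D lborel (xy True)) A = (\<integral>\<^sup>+z\<in>A. ennreal (Ph z) \<partial>lborel)"
      using split[OF A, of True] eFT[OF A] eTT[OF A] sumPh[OF A] by simp
    also have "\<dots> = emeasure (dist_of Ph) A"
      unfolding dist_of_def using A Phm by (subst emeasure_density) (auto simp: measurable_lborel1)
    finally show "emeasure (distr D lborel (xy True)) A = emeasure (dist_of Ph) A" .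
  qed
  have prob: "prob_space D"
  proof (rule prob_spaceI)
    have "emeasure D (space D) = emeasure D (xy False -` UNIV \<inter> space D)" by simp
    also have "\<dots> = emeasure (distr D lborel (xy False)) UNIV"
      by (rule emeasure_distr[OF xym, symmetric]) simp
    also have "\<dots> = emeasure (dist_of Q) UNIV" using dF by simp
    also have "\<dots> = 1" unfolding dist_of_def using Qm Q1 by (subst emeasure_density) (auto simp: measurable_lborel1)
    finally show "emeasure D (space D) = 1" .
  qed
  have nuF: "nu D False A = (\<integral>\<^sup>+z\<in>A. ennreal (q z * Q z) \<partial>lborel)" if A: "A \<in> sets borel" for A
    using eFF[OF A] unfolding nu_def spD u0_def by simp
  have nuT: "nu D True A = (\<integral>\<^sup>+z\<in>A. ennreal (ph z * Ph z) \<partial>lborel)" if A: "A \<in> sets borel" for A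
    using eTT[OF A] unfolding nu_def spD v1_def by simp
  show ?thesis by (rule that[OF sD prob nuF nuT dF dT])
qed

lemma massB:
  fixes D :: "('d::finite) obs measure"
  assumes v: "valid_obs D" and g0: "gps_dens D False p0 f0" and g1: "gps_dens D True p1 f1"
    and B: "B \<in> sets borel"
  shows "emeasure (marg f0) B = (\<integral>\<^sup>+z\<in>B\<times>UNIV. ennreal (p0 z * f0 z) \<partial>lborel) + (\<integral>\<^sup>+z\<in>B\<times>UNIV. ennreal (p1 z * f1 z) \<partial>lborel)"
proof -
  have s: "sets D = sets obs_space" using v by (simp add: valid_obs_def)
  have sp: "space D = UNIV" using sets_eq_imp_space_eq[OF s] by simp
  have BU: "B \<times> UNIV \<in> sets (borel :: ((real^'d) \<times> real) measure)" by (rule BU_sets[OF B])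
  have fm: "fst \<in> measurable D (borel :: (real^'d) measure)"
  proof -
    have "fst \<in> measurable (obs_space :: 'd obs measure) (borel :: (real^'d) measure)"
      unfolding obs_space_def by measurable
    then show ?thesis using measurable_cong_sets[OF s refl] by blast
  qed
  have "emeasure (marg f0) B = emeasure (distr D borel fst) B"
    using marg_distr[OF s] g0 unfolding gps_dens_def by metis
  also have "\<dots> = emeasure D (fst -` B \<inter> space D)" by (rule emeasure_distr[OF fm B])
  also have "fst -` B \<inter> space D = {\<omega>\<in>space D. fst (snd \<omega>) = False \<and> xy False \<omega> \<in> B\<times>UNIV} \<union> {\<omega>\<in>space D. fst (snd \<omega>) = True \<and> xy True \<omega> \<in> B\<times>UNIV}"
    by (auto simp: sp xy_def split_beta')
  also have "emeasure D \<dots> = nu D False (B\<times>UNIV) + nu D True (B\<times>UNIV)"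
    unfolding nu_def
    apply (rule plus_emeasure[symmetric])
    using obs_set_meas[OF BU, of False] obs_set_meas[OF BU, of True] s sp by auto
  also have "\<dots> = (\<integral>\<^sup>+z\<in>B\<times>UNIV. ennreal (p0 z * f0 z) \<partial>lborel) + (\<integral>\<^sup>+z\<in>B\<times>UNIV. ennreal (p1 z * f1 z) \<partial>lborel)"
    using nu_dens[OF g0 BU] nu_dens[OF g1 BU] by simp
  finally show ?thesis .
qed

lemma splitA:
  fixes p f :: "('d::finite) cofun"
  assumes pm: "p \<in> borel_measurable borel" and fm: "f \<in> borel_measurable borel"
    and pb: "\<And>z. 0 \<le> p z \<and> p z \<le> 1" and fn: "\<And>z. 0 \<le> f z" and A: "A \<in> sets borel"
  shows "(\<integral>\<^sup>+z\<in>A. ennreal (f z) \<partial>lborel) = (\<integral>\<^sup>+z\<in>A. ennreal (p z * f z) \<partial>lborel) + (\<integral>\<^sup>+z\<in>A. ennreal ((1 - p z) * f z) \<partial>lborel)"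
proof -
  note pm[measurable] fm[measurable] A[measurable]
  have "(\<integral>\<^sup>+z\<in>A. ennreal (p z * f z) \<partial>lborel) + (\<integral>\<^sup>+z\<in>A. ennreal ((1 - p z) * f z) \<partial>lborel)
     = (\<integral>\<^sup>+z. ennreal (p z * f z) * indicator A z + ennreal ((1 - p z) * f z) * indicator A z \<partial>lborel)"
    by (rule nn_integral_add[symmetric]) (auto simp: measurable_lborel1)
  also have "\<dots> = (\<integral>\<^sup>+z\<in>A. ennreal (f z) \<partial>lborel)"
  proof (rule nn_integral_cong)
    fix z
    have "ennreal (p z * f z) + ennreal ((1 - p z) * f z) = ennreal (f z)"
      using pb[of z] fn[of z]
      by (subst ennreal_plus[symmetric]) (auto simp: algebra_simps mult_left_le)
    then show "ennreal (p z * f z) * indicator A z + ennreal ((1 - p z) * f z) * indicator A z = ennreal (f z) * indicator A z"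
      by (metis distrib_right)
  qed
  finally show ?thesis by simp
qed

lemma integ_xfer:
  fixes D :: "('d::finite) obs measure"
  assumes s: "sets D = sets obs_space"
  shows "integrable (distr D lborel (xy t)) snd \<longleftrightarrow> integrable D (\<lambda>\<omega>. snd (xy t \<omega>))"
proof -
  have m: "xy t \<in> measurable D lborel" using xy_meas_l measurable_cong_sets[OF s refl] by blast
  have "snd \<in> borel_measurable (lborel :: ((real^'d) \<times> real) measure)"
    by (auto simp: measurable_lborel1 intro!: borel_measurable_continuous_onI continuous_intros)
  from integrable_distr_eq[OF m this] show ?thesis by simp
qed

lemma dir2:
  fixes PP DD :: "('d::finite) cofun set"
  assumes PPb: "\<forall>p\<in>PP. \<forall>z. 0 \<le> p z \<and> p z \<le> 1" and DDb: "\<forall>P\<in>DD. is_density P"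
    and AI: "ate_identifiable PP DD"
  shows "identifiability_condition PP DD"
  unfolding identifiability_condition_def
proof (intro allI impI)
  fix p P q Q assume cP: "compatible PP DD p P" and cQ: "compatible PP DD q Q"
  show "mean_outcome P = mean_outcome Q \<or> marg P \<noteq> marg Q \<or>
        \<not> (AE z in lborel. z \<in> msupp (marg P) \<times> UNIV \<longrightarrow> p z * P z = q z * Q z)"
  proof (rule ccontr)
    assume "\<not> ?thesis"
    then have mne: "mean_outcome P \<noteq> mean_outcome Q" and mg: "marg P = marg Q"
      and aeS: "AE z in lborel. z \<in> msupp (marg P) \<times> UNIV \<longrightarrow> p z * P z = q z * Q z" by auto
    obtain ph Ph DP where hP: "p \<in> PP" "P \<in> DD" "ph \<in> PP" "Ph \<in> DD" and vP: "valid_obs DP"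
      and gP0: "gps_dens DP False p P" and gP1: "gps_dens DP True ph Ph"
      using cP unfolding compatible_def by blast
    obtain qh Qh DQ where hQ: "q \<in> PP" "Q \<in> DD" "qh \<in> PP" "Qh \<in> DD" and vQ: "valid_obs DQ"
      and gQ0: "gps_dens DQ False q Q" and gQ1: "gps_dens DQ True qh Qh"
      using cQ unfolding compatible_def by blast
    obtain F where F: "\<And>D. realizable PP DD D \<Longrightarrow> F (censor D) = ate D"
      using AI unfolding ate_identifiable_def by blast
    have pb: "\<And>z. 0 \<le> p z \<and> p z \<le> 1" "\<And>z. 0 \<le> ph z \<and> ph z \<le> 1" "\<And>z. 0 \<le> q z \<and> q z \<le> 1"
      using PPb hP hQ by blast+
    have dens: "is_density P" "is_density Ph" "is_density Q"
      using DDb hP hQ by blast+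
    have fn: "\<And>z. 0 \<le> P z" "\<And>z. 0 \<le> Ph z" "\<And>z. 0 \<le> Q z"
      using dens unfolding is_density_def by blast+
    have fm: "P \<in> borel_measurable borel" "Ph \<in> borel_measurable borel" "Q \<in> borel_measurable borel"
      using dens unfolding is_density_def by (auto simp: measurable_lborel1)
    have pm: "p \<in> borel_measurable borel" "ph \<in> borel_measurable borel" "q \<in> borel_measurable borel"
      using gP0 gP1 gQ0 unfolding gps_dens_def by (auto simp: measurable_lborel1)
    note fm[measurable] pm[measurable]
    have sP: "sets DP = sets obs_space" and sQ: "sets DQ = sets obs_space"
      using vP vQ by (auto simp: valid_obs_def)
    define S where "S = msupp (marg P)"
    have smP: "sets (marg P) = sets borel" by (simp add: marg_def)
    have Sc: "- S \<in> sets borel" using supp_null(1)[OF smP] unfolding S_def by simp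
    have SU: "(- S) \<times> UNIV \<in> sets (borel :: ((real^'d) \<times> real) measure)" by (rule BU_sets[OF Sc])
    have zP: "emeasure (marg P) (- S) = 0" using supp_null(2)[OF smP] unfolding S_def .
    have zQ: "emeasure (marg Q) (- S) = 0" using zP mg by simp
    have aeZ: "AE z in lborel. fst z \<notin> S \<longrightarrow> f z = 0"
      if fd: "is_density f" and fnn: "\<And>z. 0 \<le> f z" and z: "emeasure (marg f) (- S) = 0" for f
    proof -
      have fmm: "f \<in> borel_measurable borel" using fd unfolding is_density_def by (simp add: measurable_lborel1)
      have "(\<integral>\<^sup>+z\<in>(- S)\<times>UNIV. ennreal (f z) \<partial>lborel) = 0" using marg_emeasure[OF fd Sc] z by simp
      then have "AE z in lborel. ennreal (f z) * indicator ((- S)\<times>UNIV) z = 0"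
        using fmm SU by (subst nn_integral_0_iff_AE[symmetric]) (auto simp: measurable_lborel1)
      then show ?thesis
      proof (rule eventually_mono)
        fix z assume "ennreal (f z) * indicator ((- S)\<times>UNIV) z = 0"
        then show "fst z \<notin> S \<longrightarrow> f z = 0" using fnn[of z]
          by (cases z) (auto simp: indicator_def)
      qed
    qed
    have aeall: "AE z in lborel. p z * P z = q z * Q z"
      using aeS aeZ[OF dens(1) fn(1) zP] aeZ[OF dens(3) fn(3) zQ]
    proof eventually_elim
      case (elim z)
      then show ?case unfolding S_def by (cases "fst z \<in> msupp (marg P)") (auto simp: mem_Times_iff)
    qed
    have intPQ: "(\<integral>\<^sup>+z\<in>A. ennreal (p z * P z) \<partial>lborel) = (\<integral>\<^sup>+z\<in>A. ennreal (q z * Q z) \<partial>lborel)" for A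
      by (rule nn_integral_cong_AE) (use aeall in \<open>auto elim: eventually_mono\<close>)
    have finP1: "(\<integral>\<^sup>+z\<in>A. ennreal (ph z * Ph z) \<partial>lborel) \<noteq> \<top>" if A: "A \<in> sets borel" for A
    proof -
      have "prob_space DP" using vP unfolding valid_obs_def by simp
      then have "nu DP True A \<le> 1" unfolding nu_def by (rule prob_space.emeasure_le_1)
      then have "nu DP True A \<noteq> \<top>" using ennreal_one_less_top top.not_eq_extremum by (metis order_le_less_trans)
      then show ?thesis using nu_dens[OF gP1 A] by simp
    qed
    have finQ0: "(\<integral>\<^sup>+z\<in>A. ennreal (q z * Q z) \<partial>lborel) \<noteq> \<top>" if A: "A \<in> sets borel" for A
    proof -
      have "prob_space DQ" using vQ unfolding valid_obs_def by simp
      then have "nu DQ False A \<le> 1" unfolding nu_def by (rule prob_space.emeasure_le_1)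
      then have "nu DQ False A \<noteq> \<top>" using ennreal_one_less_top top.not_eq_extremum by (metis order_le_less_trans)
      then show ?thesis using nu_dens[OF gQ0 A] by simp
    qed
    have margPh: "marg Ph = marg P"
      using marg_distr[OF sP] gP0 gP1 unfolding gps_dens_def by metis
    have margQh: "marg Qh = marg Q"
      using marg_distr[OF sQ] gQ0 gQ1 unfolding gps_dens_def by metis
    have F1: "AE x in lborel. (\<integral>\<^sup>+y. ennreal (q (x,y) * Q (x,y)) \<partial>lborel) = (\<integral>\<^sup>+y. ennreal ((1 - ph (x,y)) * Ph (x,y)) \<partial>lborel)"
    proof (rule AE_from_sets[where u="\<lambda>z. ennreal (q z * Q z)" and v="\<lambda>z. ennreal ((1 - ph z) * Ph z)"])
      show "(\<lambda>z. ennreal (q z * Q z)) \<in> borel_measurable borel" by measurable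
      show "(\<lambda>z. ennreal ((1 - ph z) * Ph z)) \<in> borel_measurable borel" by measurable
      fix B :: "(real^'d) set" assume B: "B \<in> sets borel"
      have BU: "B \<times> UNIV \<in> sets (borel :: ((real^'d) \<times> real) measure)" by (rule BU_sets[OF B])
      have "(\<integral>\<^sup>+z\<in>B\<times>UNIV. ennreal (ph z * Ph z) \<partial>lborel) + (\<integral>\<^sup>+z\<in>B\<times>UNIV. ennreal ((1 - ph z) * Ph z) \<partial>lborel)
          = (\<integral>\<^sup>+z\<in>B\<times>UNIV. ennreal (Ph z) \<partial>lborel)"
        using splitA[OF pm(2) fm(2) pb(2) fn(2) BU] by simp
      also have "\<dots> = emeasure (marg Ph) B" using marg_emeasure[OF dens(2) B] by simp
      also have "\<dots> = emeasure (marg P) B" using margPh by simp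
      also have "\<dots> = (\<integral>\<^sup>+z\<in>B\<times>UNIV. ennreal (p z * P z) \<partial>lborel) + (\<integral>\<^sup>+z\<in>B\<times>UNIV. ennreal (ph z * Ph z) \<partial>lborel)"
        by (rule massB[OF vP gP0 gP1 B])
      also have "\<dots> = (\<integral>\<^sup>+z\<in>B\<times>UNIV. ennreal (ph z * Ph z) \<partial>lborel) + (\<integral>\<^sup>+z\<in>B\<times>UNIV. ennreal (q z * Q z) \<partial>lborel)"
        using intPQ by (simp add: add.commute)
      finally show "(\<integral>\<^sup>+z\<in>B\<times>UNIV. ennreal (q z * Q z) \<partial>lborel) = (\<integral>\<^sup>+z\<in>B\<times>UNIV. ennreal ((1 - ph z) * Ph z) \<partial>lborel)"
        using finP1[OF BU] by (subst (asm) ennreal_add_left_cancel) auto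
    qed
    have F2: "AE x in lborel. (\<integral>\<^sup>+y. ennreal ((1 - q (x,y)) * Q (x,y)) \<partial>lborel) = (\<integral>\<^sup>+y. ennreal (ph (x,y) * Ph (x,y)) \<partial>lborel)"
    proof (rule AE_from_sets[where u="\<lambda>z. ennreal ((1 - q z) * Q z)" and v="\<lambda>z. ennreal (ph z * Ph z)"])
      show "(\<lambda>z. ennreal ((1 - q z) * Q z)) \<in> borel_measurable borel" by measurable
      show "(\<lambda>z. ennreal (ph z * Ph z)) \<in> borel_measurable borel" by measurable
      fix B :: "(real^'d) set" assume B: "B \<in> sets borel"
      have BU: "B \<times> UNIV \<in> sets (borel :: ((real^'d) \<times> real) measure)" by (rule BU_sets[OF B])
      have "(\<integral>\<^sup>+z\<in>B\<times>UNIV. ennreal (q z * Q z) \<partial>lborel) + (\<integral>\<^sup>+z\<in>B\<times>UNIV. ennreal ((1 - q z) * Q z) \<partial>lborel)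
          = (\<integral>\<^sup>+z\<in>B\<times>UNIV. ennreal (Q z) \<partial>lborel)"
        using splitA[OF pm(3) fm(3) pb(3) fn(3) BU] by simp
      also have "\<dots> = emeasure (marg Q) B" using marg_emeasure[OF dens(3) B] by simp
      also have "\<dots> = emeasure (marg P) B" using mg by simp
      also have "\<dots> = (\<integral>\<^sup>+z\<in>B\<times>UNIV. ennreal (p z * P z) \<partial>lborel) + (\<integral>\<^sup>+z\<in>B\<times>UNIV. ennreal (ph z * Ph z) \<partial>lborel)"
        by (rule massB[OF vP gP0 gP1 B])
      also have "\<dots> = (\<integral>\<^sup>+z\<in>B\<times>UNIV. ennreal (q z * Q z) \<partial>lborel) + (\<integral>\<^sup>+z\<in>B\<times>UNIV. ennreal (ph z * Ph z) \<partial>lborel)"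
        using intPQ by simp
      finally show "(\<integral>\<^sup>+z\<in>B\<times>UNIV. ennreal ((1 - q z) * Q z) \<partial>lborel) = (\<integral>\<^sup>+z\<in>B\<times>UNIV. ennreal (ph z * Ph z) \<partial>lborel)"
        using finQ0[OF BU] by (subst (asm) ennreal_add_left_cancel) auto
    qed
    obtain D :: "'d obs measure" where sD: "sets D = sets obs_space" and pD: "prob_space D"
      and nuF: "\<And>A. A \<in> sets borel \<Longrightarrow> nu D False A = (\<integral>\<^sup>+z\<in>A. ennreal (q z * Q z) \<partial>lborel)"
      and nuT: "\<And>A. A \<in> sets borel \<Longrightarrow> nu D True A = (\<integral>\<^sup>+z\<in>A. ennreal (ph z * Ph z) \<partial>lborel)"
      and dF: "distr D lborel (xy False) = dist_of Q" and dT: "distr D lborel (xy True) = dist_of Ph"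
      using construct[OF pm(3) pm(2) dens(3) dens(2) _ _ F1 F2] pb(2,3) by blast
    have eq0: "(\<lambda>(x::real^'d,t::bool,y0::real,y1::real). y0) = (\<lambda>\<omega>. snd (xy False \<omega>))" by (auto simp: xy_def)
    have eq1: "(\<lambda>(x::real^'d,t::bool,y0::real,y1::real). y1) = (\<lambda>\<omega>. snd (xy True \<omega>))" by (auto simp: xy_def)
    have iQ: "integrable (dist_of Q) snd"
      using vQ gQ0 integ_xfer[OF sQ, of False] unfolding valid_obs_def gps_dens_def eq0 by simp
    have iPh: "integrable (dist_of Ph) snd"
      using vP gP1 integ_xfer[OF sP, of True] unfolding valid_obs_def gps_dens_def eq1 by simp
    have vD: "valid_obs D"
      unfolding valid_obs_def
    proof (intro conjI allI)
      show "prob_space D" by (rule pD)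
      show "sets D = sets obs_space" by (rule sD)
      show "integrable D (\<lambda>(x,t,y0,y1). y0)" using iQ integ_xfer[OF sD, of False] dF unfolding eq0 by simp
      show "integrable D (\<lambda>(x,t,y0,y1). y1)" using iPh integ_xfer[OF sD, of True] dT unfolding eq1 by simp
      fix t show "\<exists>f. is_density f \<and> distr D lborel (xy t) = dist_of f"
        using dF dT dens by (cases t) auto
    qed
    have spD: "space D = UNIV" using sets_eq_imp_space_eq[OF sD] by simp
    have gD0: "gps_dens D False q Q"
      unfolding gps_dens_def using dens(3) dF pm(3) nuF unfolding nu_def by (simp add: measurable_lborel1)
    have gD1: "gps_dens D True ph Ph"
      unfolding gps_dens_def using dens(2) dT pm(2) nuT unfolding nu_def by (simp add: measurable_lborel1)
    have rD: "realizable PP DD D" unfolding realizable_def using vD hQ hP gD0 gD1 by blast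
    have rP: "realizable PP DD DP" unfolding realizable_def using vP hP gP0 gP1 by blast
    have ce: "censor D = censor DP"
    proof (rule censor_eq_nu[OF sD sP])
      fix t and A :: "((real^'d) \<times> real) set" assume A: "A \<in> sets borel"
      show "nu D t A = nu DP t A"
        by (cases t) (simp_all add: nuF[OF A] nuT[OF A] nu_dens[OF gP0 A] nu_dens[OF gP1 A] intPQ)
    qed
    have "ate D = ate DP" using F[OF rD] F[OF rP] ce by simp
    moreover have "ate D = mean_outcome Ph - mean_outcome Q" by (rule ate_mean[OF vD dF dT])
    moreover have "ate DP = mean_outcome Ph - mean_outcome P"
      by (rule ate_mean[OF vP]) (use gP0 gP1 in \<open>auto simp: gps_dens_def\<close>)
    ultimately show False using mne by simp
  qed
qed

theorem theorem1p1:
  fixes PP DD :: "('d::finite) cofun set"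
  assumes "\<forall>p\<in>PP. \<forall>z. 0 \<le> p z \<and> p z \<le> 1"
    and "\<forall>P\<in>DD. is_density P"
  shows "ate_identifiable PP DD \<longleftrightarrow> identifiability_condition PP DD"
  using dir1'[OF assms(1)] dir2[OF assms] by blast

end
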